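(* Let $\mathcal{L}$ be a set, $\mathcal{R}\subseteq\mathcal{P}(\mathcal{L})\times\mathcal{L}$, and let $\mathcal{S}=\langle\mathcal{L},\vdash\rangle$ be the Hilbert-type logical structure induced by $\mathcal{R}$. Let $\Pi$ be a collection of relations $\sigma\subseteq\mathcal{P}(\mathcal{L})\times\mathcal{L}$, and let $\mathcal{S}^\Pi=\langle\mathcal{L},\vdash^\Pi\rangle$ be the $\Pi$-restricted companion of $\mathcal{S}$. Define $\varrho\subseteq\mathcal{P}(\mathcal{L})\times\mathcal{L}$ by $(\Delta,\alpha)\in\varrho$ iff $\Delta\vdash^\Pi\alpha$. Then $\vdash^\Pi\,=\,\vdash^\varrho$, where $\vdash^\varrho$ is the $\varrho$-companion of $\mathcal{S}$.
   Context: For $\mathcal{R}\subseteq\mathcal{P}(\mathcal{L})\times\mathcal{L}$, the Hilbert-type logical structure induced by $\mathcal{R}$ is $\langle\mathcal{L},\vdash\rangle$ where $\Gamma\vdash\alpha$ iff there is a finite sequence $(\beta_0,\ldots,\beta_n)$ of elements of $\mathcal{L}$ with $\beta_n=\alpha$ such that for each $0\le i\le n$, either $\beta_i\in\Gamma$ or there is $\Gamma'\subseteq\{\beta_0,\ldots,\beta_{i-1}\}$ with $(\Gamma',\beta_i)\in\mathcal{R}$. The $\Pi$-restricted companion of the structure induced by $\mathcal{R}$ is the Hilbert-type logical structure induced by $\mathcal{R}^\Pi=\{(\Gamma,\alpha)\in\mathcal{R}\mid (\Gamma,\alpha)\in\sigma\text{ for some }\sigma\in\Pi\}$. For a logical structure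 $\langle\mathcal{L},\vdash\rangle$ and $\varrho\subseteq\mathcal{P}(\mathcal{L})\times\mathcal{L}$, the $\varrho$-companion is given by: $\Gamma\vdash^\varrho\alpha$ iff there is $\Delta\subseteq\Gamma$ with $(\Delta,\alpha)\in\varrho$ and $\Delta\vdash\alpha$. *)

theory Defs
  imports Main
begin

text \<open>The language L is modelled as the type 'a (all formulas).
  A logical structure is given by its consequence relation of type
  'a set \<Rightarrow> 'a \<Rightarrow> bool.\<close>

definition hilbert_cons :: "('a set \<times> 'a) set \<Rightarrow> 'a set \<Rightarrow> 'a \<Rightarrow> bool" where
  "hilbert_cons R \<Gamma> \<alpha> \<longleftrightarrow>
     (\<exists>bs. bs \<noteq> [] \<and> last bs = \<alpha> \<and>
        (\<forall>i < length bs. bs ! i \<in> \<Gamma> \<or>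
           (\<exists>\<Gamma>'. \<Gamma>' \<subseteq> set (take i bs) \<and> (\<Gamma>', bs ! i) \<in> R)))"

definition restricted_rules :: "('a set \<times> 'a) set \<Rightarrow> ('a set \<times> 'a) set set \<Rightarrow> ('a set \<times> 'a) set" where
  "restricted_rules R \<Pi> = {r \<in> R. \<exists>\<sigma> \<in> \<Pi>. r \<in> \<sigma>}"

definition restricted_companion :: "('a set \<times> 'a) set \<Rightarrow> ('a set \<times> 'a) set set \<Rightarrow> 'a set \<Rightarrow> 'a \<Rightarrow> bool" where
  "restricted_companion R \<Pi> = hilbert_cons (restricted_rules R \<Pi>)"

definition rho_companion :: "('a set \<Rightarrow> 'a \<Rightarrow> bool) \<Rightarrow> ('a set \<times> 'a) set \<Rightarrow> 'a set \<Rightarrow> 'a \<Rightarrow> bool" where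
  "rho_companion cons \<rho> \<Gamma> \<alpha> \<longleftrightarrow> (\<exists>\<Delta> \<subseteq> \<Gamma>. (\<Delta>, \<alpha>) \<in> \<rho> \<and> cons \<Delta> \<alpha>)"

end

theory Submission
  imports Defs
begin

lemma hc_mono:
  assumes "hilbert_cons R G a" "R \<subseteq> R'" "G \<subseteq> G'"
  shows "hilbert_cons R' G' a"
proof -
  obtain bs where bs: "bs \<noteq> []" "last bs = a"
    "\<And>i. i < length bs \<Longrightarrow> bs ! i \<in> G \<or> (\<exists>\<Gamma>'. \<Gamma>' \<subseteq> set (take i bs) \<and> (\<Gamma>', bs ! i) \<in> R)"
    using assms(1) unfolding hilbert_cons_def by auto
  have "\<forall>i < length bs. bs ! i \<in> G' \<or> (\<exists>\<Gamma>'. \<Gamma>' \<subseteq> set (take i bs) \<and> (\<Gamma>', bs ! i) \<in> R')"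
  proof (intro allI impI)
    fix i assume "i < length bs"
    from bs(3)[OF this] show "bs ! i \<in> G' \<or> (\<exists>\<Gamma>'. \<Gamma>' \<subseteq> set (take i bs) \<and> (\<Gamma>', bs ! i) \<in> R')"
    proof
      assume "bs ! i \<in> G" then show ?thesis using assms(3) by (intro disjI1) (rule subsetD)
    next
      assume "\<exists>\<Gamma>'. \<Gamma>' \<subseteq> set (take i bs) \<and> (\<Gamma>', bs ! i) \<in> R"
      then obtain D where "D \<subseteq> set (take i bs)" "(D, bs ! i) \<in> R" by blast
      then show ?thesis using assms(2) by (intro disjI2 exI[of _ D]) auto
    qed
  qed
  then show ?thesis unfolding hilbert_cons_def using bs(1,2) by (intro exI[of _ bs]) simp
qed

theorem mainTheorem13:
  fixes R :: "('a set \<times> 'a) set" and \<Pi> :: "('a set \<times> 'a) set set"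
  defines "\<rho> \<equiv> {(\<Delta>, \<alpha>). restricted_companion R \<Pi> \<Delta> \<alpha>}"
  shows "restricted_companion R \<Pi> = rho_companion (hilbert_cons R) \<rho>"
proof (intro ext iffI)
  fix G a
  assume h: "restricted_companion R \<Pi> G a"
  have "hilbert_cons R G a"
  proof (rule hc_mono[of "restricted_rules R \<Pi>" G a R G])
    show "hilbert_cons (restricted_rules R \<Pi>) G a"
      using h unfolding restricted_companion_def .
  qed (auto simp: restricted_rules_def)
  then show "rho_companion (hilbert_cons R) \<rho> G a"
    using h unfolding rho_companion_def \<rho>_def by auto
next
  fix G a
  assume "rho_companion (hilbert_cons R) \<rho> G a"
  then obtain D where D: "D \<subseteq> G" "restricted_companion R \<Pi> D a"
    unfolding rho_companion_def \<rho>_def by auto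
  show "restricted_companion R \<Pi> G a"
    using hc_mono[OF D(2)[unfolded restricted_companion_def] order_refl D(1)]
    unfolding restricted_companion_def .
qed

end
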